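(* Let $S$ be a Boolean inverse semigroup and $s,t\in S$ with $s\sim t$. Then $s\,\triangledown\,t=s\vee t$.
   Context: $S$ is an inverse semigroup with zero in which every pair of compatible elements has a join, multiplication distributes over such joins, and the semilattice of idempotents is a generalized Boolean algebra (a distributive lattice with bottom in which each principal order ideal is a unital Boolean algebra); no identity is assumed. $\mathbf{d}(a)=a^{-1}a$, $\mathbf{r}(a)=aa^{-1}$; $s\sim t$ means $s^{-1}t$ and $st^{-1}$ are idempotents. For idempotents $e,f$, $e\setminus ef$ denotes the relative complement of $ef$ below $e$. For $a,b\in S$ put $e=\mathbf{d}(a)\setminus\mathbf{d}(a)\mathbf{d}(b)$, $f=\mathbf{r}(b)\setminus\mathbf{r}(a)\mathbf{r}(b)$, $a\ominus b=fae$ (left skew difference; it is orthogonal to $b$), and $a\,\triangledown\,b=(a\ominus b)\vee b$ (left skew join). *)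

theory Defs
  imports Main
begin

definition inverse_semigroup :: "('a \<Rightarrow> 'a \<Rightarrow> 'a) \<Rightarrow> bool" where
  "inverse_semigroup m \<longleftrightarrow>
     (\<forall>a b c. m (m a b) c = m a (m b c)) \<and>
     (\<forall>a. \<exists>!b. m (m a b) a = a \<and> m (m b a) b = b)"

definition isg_inv :: "('a \<Rightarrow> 'a \<Rightarrow> 'a) \<Rightarrow> 'a \<Rightarrow> 'a" where
  "isg_inv m a = (THE b. m (m a b) a = a \<and> m (m b a) b = b)"

definition is_zero :: "('a \<Rightarrow> 'a \<Rightarrow> 'a) \<Rightarrow> 'a \<Rightarrow> bool" where
  "is_zero m z \<longleftrightarrow> (\<forall>a. m z a = z \<and> m a z = z)"

definition idem :: "('a \<Rightarrow> 'a \<Rightarrow> 'a) \<Rightarrow> 'a \<Rightarrow> bool" where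
  "idem m e \<longleftrightarrow> m e e = e"

definition dom_s :: "('a \<Rightarrow> 'a \<Rightarrow> 'a) \<Rightarrow> 'a \<Rightarrow> 'a" where
  "dom_s m a = m (isg_inv m a) a"

definition ran_s :: "('a \<Rightarrow> 'a \<Rightarrow> 'a) \<Rightarrow> 'a \<Rightarrow> 'a" where
  "ran_s m a = m a (isg_inv m a)"

definition nat_le :: "('a \<Rightarrow> 'a \<Rightarrow> 'a) \<Rightarrow> 'a \<Rightarrow> 'a \<Rightarrow> bool" where
  "nat_le m s t \<longleftrightarrow> s = m t (dom_s m s)"

definition compat :: "('a \<Rightarrow> 'a \<Rightarrow> 'a) \<Rightarrow> 'a \<Rightarrow> 'a \<Rightarrow> bool" where
  "compat m s t \<longleftrightarrow> idem m (m (isg_inv m s) t) \<and> idem m (m s (isg_inv m t))"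

definition is_join :: "('a \<Rightarrow> 'a \<Rightarrow> 'a) \<Rightarrow> 'a \<Rightarrow> 'a \<Rightarrow> 'a \<Rightarrow> bool" where
  "is_join m x s t \<longleftrightarrow> nat_le m s x \<and> nat_le m t x \<and>
     (\<forall>y. nat_le m s y \<and> nat_le m t y \<longrightarrow> nat_le m x y)"

definition join :: "('a \<Rightarrow> 'a \<Rightarrow> 'a) \<Rightarrow> 'a \<Rightarrow> 'a \<Rightarrow> 'a" where
  "join m s t = (THE x. is_join m x s t)"

definition is_join_E :: "('a \<Rightarrow> 'a \<Rightarrow> 'a) \<Rightarrow> 'a \<Rightarrow> 'a \<Rightarrow> 'a \<Rightarrow> bool" where
  "is_join_E m x e f \<longleftrightarrow> idem m x \<and> nat_le m e x \<and> nat_le m f x \<and>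
     (\<forall>y. idem m y \<and> nat_le m e y \<and> nat_le m f y \<longrightarrow> nat_le m x y)"

definition join_E :: "('a \<Rightarrow> 'a \<Rightarrow> 'a) \<Rightarrow> 'a \<Rightarrow> 'a \<Rightarrow> 'a" where
  "join_E m e f = (THE x. is_join_E m x e f)"

text \<open>The idempotents form a generalized Boolean algebra: a distributive lattice
  (meet = product) with bottom z in which every principal order ideal is a Boolean algebra,
  i.e. relative complements exist.\<close>
definition gen_boolean_idems :: "('a \<Rightarrow> 'a \<Rightarrow> 'a) \<Rightarrow> 'a \<Rightarrow> bool" where
  "gen_boolean_idems m z \<longleftrightarrow>
     (\<forall>e f. idem m e \<and> idem m f \<longrightarrow> (\<exists>x. is_join_E m x e f)) \<and>
     (\<forall>e f g. idem m e \<and> idem m f \<and> idem m g \<longrightarrow>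
         m e (join_E m f g) = join_E m (m e f) (m e g)) \<and>
     (\<forall>e f. idem m e \<and> idem m f \<and> nat_le m e f \<longrightarrow>
         (\<exists>g. idem m g \<and> nat_le m g f \<and> m e g = z \<and> join_E m e g = f))"

definition rel_compl :: "('a \<Rightarrow> 'a \<Rightarrow> 'a) \<Rightarrow> 'a \<Rightarrow> 'a \<Rightarrow> 'a \<Rightarrow> 'a" where
  "rel_compl m z e f = (THE g. idem m g \<and> nat_le m g e \<and> m f g = z \<and> join_E m f g = e)"

definition boolean_inverse_semigroup :: "('a \<Rightarrow> 'a \<Rightarrow> 'a) \<Rightarrow> 'a \<Rightarrow> bool" where
  "boolean_inverse_semigroup m z \<longleftrightarrow>
     inverse_semigroup m \<and> is_zero m z \<and>
     (\<forall>s t. compat m s t \<longrightarrow> (\<exists>x. is_join m x s t)) \<and>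
     (\<forall>a s t. compat m s t \<longrightarrow>
         m a (join m s t) = join m (m a s) (m a t) \<and>
         m (join m s t) a = join m (m s a) (m t a)) \<and>
     gen_boolean_idems m z"

definition skew_diff :: "('a \<Rightarrow> 'a \<Rightarrow> 'a) \<Rightarrow> 'a \<Rightarrow> 'a \<Rightarrow> 'a \<Rightarrow> 'a" where
  "skew_diff m z a b =
     (let e = rel_compl m z (dom_s m a) (m (dom_s m a) (dom_s m b));
          f = rel_compl m z (ran_s m a) (m (ran_s m a) (ran_s m b))
      in m (m f a) e)"

definition skew_join :: "('a \<Rightarrow> 'a \<Rightarrow> 'a) \<Rightarrow> 'a \<Rightarrow> 'a \<Rightarrow> 'a \<Rightarrow> 'a" where
  "skew_join m z a b = join m (skew_diff m z a b) b"

end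

theory Submission imports Defs begin

locale isg =
  fixes m :: "'a \<Rightarrow> 'a \<Rightarrow> 'a"
  assumes isg: "inverse_semigroup m"
begin

abbreviation iv where "iv \<equiv> isg_inv m"

lemma assoc[simp]: "m (m a b) c = m a (m b c)"
  using isg unfolding inverse_semigroup_def by blast

lemma inv_ex: "\<exists>!b. m (m a b) a = a \<and> m (m b a) b = b"
  using isg unfolding inverse_semigroup_def by (rule conjunct2[THEN spec])

lemma inv_prop: "m (m a (iv a)) a = a \<and> m (m (iv a) a) (iv a) = iv a"
  unfolding isg_inv_def by (rule theI'[OF inv_ex])

lemma inv1[simp]: "m a (m (iv a) a) = a" using inv_prop by simp
lemma inv2[simp]: "m (iv a) (m a (iv a)) = iv a" using inv_prop by simp

lemma inv_uniq: "m a (m b a) = a \<Longrightarrow> m b (m a b) = b \<Longrightarrow> b = iv a"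
proof -
  assume h1: "m a (m b a) = a" and h2: "m b (m a b) = b"
  have p1: "m (m a b) a = a \<and> m (m b a) b = b" using h1 h2 by simp
  have p2: "m (m a (iv a)) a = a \<and> m (m (iv a) a) (iv a) = iv a" by (rule inv_prop)
  obtain c where c: "\<forall>y. m (m a y) a = a \<and> m (m y a) y = y \<longrightarrow> y = c"
    using inv_ex[of a] unfolding Ex1_def by (elim exE conjE) (rule that)
  have "b = c" using c p1 by (elim allE impE)
  moreover have "iv a = c" using c p2 by (elim allE impE)
  ultimately show ?thesis by simp
qed

lemma inv1'[simp]: "m a (m (iv a) (m a x)) = m a x"
  by (metis assoc inv1)
lemma inv2'[simp]: "m (iv a) (m a (m (iv a) x)) = m (iv a) x"
  by (metis assoc inv2)

lemma inv_inv[simp]: "iv (iv a) = a"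
  by (metis inv1 inv2 inv_uniq)

lemma idemD: "idem m e \<Longrightarrow> m e e = e" by (simp add: idem_def)
lemma idemD': "idem m e \<Longrightarrow> m e (m e x) = m e x" by (metis assoc idemD)

lemma idem_inv: "idem m e \<Longrightarrow> iv e = e"
proof -
  assume e: "idem m e"
  have "m e (m e e) = e" using idemD[OF e] by simp
  from inv_uniq[of e e, OF this this] show ?thesis by (rule sym)
qed

lemma idem_prod: assumes e: "idem m e" and f: "idem m f" shows "idem m (m e f)"
proof -
  define x where "x = iv (m e f)"
  have x1: "m (m e f) (m x (m e f)) = m e f" unfolding x_def by simp
  have x2: "m x (m (m e f) x) = x" unfolding x_def by (metis inv2)
  have a: "m (m e f) (m (m f (m x e)) (m e f)) = m e f"
    using x1 e f by (simp add: idemD')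
  have x2': "m x (m e (m f (m x e))) = m x e" using x2 by (metis assoc)
  have b: "m (m f (m x e)) (m (m e f) (m f (m x e))) = m f (m x e)"
    using x2' e f by (simp add: idemD' idemD)
  have c: "m f (m x e) = x" using inv_uniq[OF a b] unfolding x_def by simp
  have xe: "m x e = x" using c idemD'[OF e] by (metis assoc)
  have fx: "m f x = x" using c idemD'[OF f] by (metis assoc)
  have xx: "m x x = x" using xe fx x2 by (metis assoc)
  have "m e f = iv x" 
    apply (rule inv_uniq) using x1 x2 unfolding x_def by simp_all
  moreover have ix: "iv x = x" by (rule idem_inv) (simp add: idem_def xx)
  ultimately have "m e f = x" by simp
  then show ?thesis using xx unfolding idem_def by simp
qed

lemma idem_comm: assumes e: "idem m e" and f: "idem m f" shows "m e f = m f e"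
proof -
  have ef: "idem m (m e f)" and fe: "idem m (m f e)" using idem_prod e f by auto
  have "m f e = iv (m e f)"
    apply (rule inv_uniq)
    using idemD'[OF ef] idemD'[OF fe] idemD'[OF e] idemD'[OF f] idemD[OF ef] idemD[OF fe] by simp_all
  then show ?thesis using idem_inv[OF ef] by simp
qed


lemma idem_dom: "idem m (m (iv a) a)" unfolding idem_def by simp
lemma idem_ran: "idem m (m a (iv a))" unfolding idem_def by simp

lemma comm_x: "idem m e \<Longrightarrow> idem m f \<Longrightarrow> m e (m f x) = m f (m e x)"
  by (metis assoc idem_comm)

lemma iv_prod: "iv (m a b) = m (iv b) (iv a)"
proof (rule inv_uniq[symmetric])
  have c1: "m b (m (iv b) (m (iv a) (m a x))) = m (iv a) (m a (m b (m (iv b) x)))" for x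
    using comm_x[OF idem_ran[of b] idem_dom[of a]] by simp
  show "m (m a b) (m (m (iv b) (iv a)) (m a b)) = m a b" using c1 by simp
  have c2: "m (iv a) (m a (m b (m (iv b) x))) = m b (m (iv b) (m (iv a) (m a x)))" for x
    using c1 by simp
  show "m (m (iv b) (iv a)) (m (m a b) (m (iv b) (iv a))) = m (iv b) (iv a)" using c2 by simp
qed

lemma dom_idem: "idem m e \<Longrightarrow> dom_s m e = e"
  unfolding dom_s_def using idem_inv idemD by simp

lemma le_refl: "nat_le m s s" unfolding nat_le_def dom_s_def by simp

lemma dom_mult_idem: "idem m e \<Longrightarrow> dom_s m (m s e) = m (dom_s m s) e"
  unfolding dom_s_def iv_prod using idem_inv[of e] comm_x[OF _ idem_dom[of s], of e] idemD'[of e] idemD[of e]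
  by simp

lemma mult_right_le: "idem m e \<Longrightarrow> nat_le m (m s e) s"
  unfolding nat_le_def using dom_mult_idem[of e s] unfolding dom_s_def by simp

lemma dom_le: assumes "nat_le m s t" shows "dom_s m s = m (dom_s m s) (dom_s m t)"
proof -
  have st: "s = m t (dom_s m s)" using assms unfolding nat_le_def .
  have ids: "idem m (dom_s m s)" unfolding dom_s_def by (rule idem_dom)
  have "dom_s m s = dom_s m (m t (dom_s m s))" using st by simp
  also have "\<dots> = m (dom_s m t) (dom_s m s)" by (rule dom_mult_idem[OF ids])
  also have "\<dots> = m (dom_s m s) (dom_s m t)" 
    by (rule idem_comm) (auto simp: dom_s_def idem_dom)
  finally show ?thesis .
qed

lemma le_antisym: assumes "nat_le m s t" "nat_le m t s" shows "s = t"
proof -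
  have "dom_s m s = m (dom_s m s) (dom_s m t)" by (rule dom_le[OF assms(1)])
  also have "\<dots> = m (dom_s m t) (dom_s m s)"
    by (rule idem_comm) (auto simp: dom_s_def idem_dom)
  also have "\<dots> = dom_s m t" by (rule dom_le[OF assms(2), symmetric])
  finally have d: "dom_s m s = dom_s m t" .
  have "s = m t (dom_s m s)" using assms(1) unfolding nat_le_def .
  also have "\<dots> = t" by (subst d) (simp add: dom_s_def)
  finally show ?thesis .
qed

lemma le_trans: assumes "nat_le m s t" "nat_le m t u" shows "nat_le m s u"
proof -
  have "s = m t (dom_s m s)" using assms(1) unfolding nat_le_def .
  also have "\<dots> = m u (m (dom_s m t) (dom_s m s))" using assms(2) unfolding nat_le_def
    by (metis assoc)
  also have "m (dom_s m t) (dom_s m s) = dom_s m s"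
  proof -
    have a: "dom_s m s = m (dom_s m s) (dom_s m t)" by (rule dom_le[OF assms(1)])
    have b: "m (dom_s m s) (dom_s m t) = m (dom_s m t) (dom_s m s)"
      by (rule idem_comm) (auto simp: dom_s_def idem_dom)
    show ?thesis using a b by metis
  qed
  finally show ?thesis unfolding nat_le_def .
qed

lemma le_idem: assumes "nat_le m s e" "idem m e" shows "idem m s"
proof -
  have "s = m e (dom_s m s)" using assms(1) unfolding nat_le_def .
  moreover have "idem m (m e (dom_s m s))"
    by (rule idem_prod[OF assms(2)]) (simp add: dom_s_def idem_dom)
  ultimately show ?thesis by simp
qed

lemma le_idem_iff: "idem m e \<Longrightarrow> nat_le m e f \<longleftrightarrow> e = m f e"
  unfolding nat_le_def using dom_idem by simp

lemma is_join_unique: "is_join m x s t \<Longrightarrow> is_join m y s t \<Longrightarrow> x = y"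
  unfolding is_join_def using le_antisym by blast

lemma join_eq: "is_join m x s t \<Longrightarrow> join m s t = x"
  unfolding join_def using is_join_unique by blast

lemma is_join_E_unique: "is_join_E m x s t \<Longrightarrow> is_join_E m y s t \<Longrightarrow> x = y"
  unfolding is_join_E_def using le_antisym by blast

lemma join_E_eq: "is_join_E m x s t \<Longrightarrow> join_E m s t = x"
  unfolding join_E_def using is_join_E_unique by blast


lemma compat_swap: assumes c: "compat m s t" shows "m s (dom_s m t) = m t (dom_s m s)"
proof -
  have p: "idem m (m s (iv t))" and q: "idem m (m (iv s) t)" using c unfolding compat_def by auto
  have tp: "m t (iv s) = m s (iv t)"
    using idem_inv[OF p] unfolding iv_prod by simp
  have "m s (dom_s m t) = m s (m (iv s) (m s (m (iv t) t)))" unfolding dom_s_def by simp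
  also have "\<dots> = m s (m (iv t) (m t (m (iv s) s)))"
  proof -
    have hc: "m (iv s) (m s (m (iv t) t)) = m (iv t) (m t (m (iv s) s))"
      using idem_comm[OF idem_dom[of s] idem_dom[of t]] by simp
    show ?thesis by (subst hc) (rule refl)
  qed
  also have "\<dots> = m (m s (iv t)) (m (m t (iv s)) s)" by simp
  also have "\<dots> = m (m s (iv t)) (m (m s (iv t)) s)" unfolding tp ..
  also have "\<dots> = m (m s (iv t)) s" using idemD[OF p] by (metis assoc)
  also have "\<dots> = m t (dom_s m s)" unfolding dom_s_def tp[symmetric] by simp
  finally show ?thesis .
qed

end

locale bisg = isg +
  fixes z
  assumes B: "boolean_inverse_semigroup m z"
begin

lemma zero: "is_zero m z" using B unfolding boolean_inverse_semigroup_def by blast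
lemma zl[simp]: "m z a = z" using zero unfolding is_zero_def by blast
lemma zr[simp]: "m a z = z" using zero unfolding is_zero_def by blast
lemma idem_z: "idem m z" unfolding idem_def by simp
lemma iv_z[simp]: "iv z = z" by (rule idem_inv[OF idem_z])

lemma GB: "gen_boolean_idems m z" using B unfolding boolean_inverse_semigroup_def by blast

lemma compat_join: "compat m s t \<Longrightarrow> is_join m (join m s t) s t"
proof -
  assume "compat m s t"
  then obtain x where "is_join m x s t" using B unfolding boolean_inverse_semigroup_def by blast
  then show ?thesis using join_eq by simp
qed

lemma distrib: "compat m s t \<Longrightarrow> m a (join m s t) = join m (m a s) (m a t)"
  using B unfolding boolean_inverse_semigroup_def by blast

lemma idem_compat: "idem m g \<Longrightarrow> idem m h \<Longrightarrow> compat m g h"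
  unfolding compat_def using idem_inv idem_prod by simp

lemma joinE_is: "idem m g \<Longrightarrow> idem m h \<Longrightarrow> is_join_E m (join_E m g h) g h"
proof -
  assume "idem m g" "idem m h"
  then obtain x where "is_join_E m x g h" using GB unfolding gen_boolean_idems_def by blast
  then show ?thesis using join_E_eq by simp
qed

lemma joinE_join: assumes g: "idem m g" and h: "idem m h" shows "join_E m g h = join m g h"
proof -
  have x: "is_join_E m (join_E m g h) g h" by (rule joinE_is[OF g h])
  have J: "is_join m (join m g h) g h" by (rule compat_join[OF idem_compat[OF g h]])
  have "nat_le m (join m g h) (join_E m g h)" using x J unfolding is_join_def is_join_E_def by blast
  moreover have "idem m (join m g h)" using le_idem calculation x unfolding is_join_E_def by blast
  ultimately have "nat_le m (join_E m g h) (join m g h)" using x J unfolding is_join_def is_join_E_def by blast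
  then show ?thesis using le_antisym \<open>nat_le m (join m g h) (join_E m g h)\<close> by blast
qed

lemma distE: "idem m e \<Longrightarrow> idem m f \<Longrightarrow> idem m g \<Longrightarrow>
   m e (join_E m f g) = join_E m (m e f) (m e g)"
  using GB unfolding gen_boolean_idems_def by blast

lemma joinE_zero: assumes w: "idem m w" shows "join_E m z w = w"
proof (rule join_E_eq)
  show "is_join_E m w z w" unfolding is_join_E_def
    using w le_refl le_idem_iff[OF idem_z, of w] by simp
qed

lemma compl_unique:
  assumes e: "idem m e" and f: "idem m f"
    and g1: "idem m g1 \<and> nat_le m g1 e \<and> m f g1 = z \<and> join_E m f g1 = e"
    and g2: "idem m g2 \<and> nat_le m g2 e \<and> m f g2 = z \<and> join_E m f g2 = e"
  shows "g1 = g2"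
proof -
  have a: "g1 = m g1 g2" if g1: "idem m g1 \<and> nat_le m g1 e \<and> m f g1 = z \<and> join_E m f g1 = e"
    and g2: "idem m g2 \<and> nat_le m g2 e \<and> m f g2 = z \<and> join_E m f g2 = e" for g1 g2
  proof -
    have i1: "idem m g1" and i2: "idem m g2" using g1 g2 by auto
    have "g1 = m e g1" using g1 le_idem_iff[OF i1] by blast
    also have "\<dots> = m g1 e" by (rule idem_comm[OF e i1])
    also have "\<dots> = m g1 (join_E m f g2)" using g2 by simp
    also have "\<dots> = join_E m (m g1 f) (m g1 g2)" by (rule distE[OF i1 f i2])
    also have "m g1 f = z" using g1 idem_comm[OF f i1] by simp
    also have "join_E m z (m g1 g2) = m g1 g2" by (rule joinE_zero[OF idem_prod[OF i1 i2]])
    finally show ?thesis .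
  qed
  have "g1 = m g1 g2" by (rule a[OF g1 g2])
  also have "\<dots> = m g2 g1" by (rule idem_comm) (use g1 g2 in auto)
  also have "\<dots> = g2" by (rule a[OF g2 g1, symmetric])
  finally show ?thesis .
qed

lemma compl:
  assumes e: "idem m e" and f: "idem m f" and le: "nat_le m f e"
  shows "idem m (rel_compl m z e f) \<and> nat_le m (rel_compl m z e f) e \<and>
     m f (rel_compl m z e f) = z \<and> join_E m f (rel_compl m z e f) = e"
proof -
  obtain g where g: "idem m g \<and> nat_le m g e \<and> m f g = z \<and> join_E m f g = e"
    using GB e f le unfolding gen_boolean_idems_def by blast
  have "rel_compl m z e f = g" unfolding rel_compl_def
  proof (rule the_equality)
    show "idem m g \<and> nat_le m g e \<and> m f g = z \<and> join_E m f g = e" by (rule g)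
    fix x assume "idem m x \<and> nat_le m x e \<and> m f x = z \<and> join_E m f x = e"
    then show "x = g" by (rule compl_unique[OF e f _ g])
  qed
  then show ?thesis using g by simp
qed


lemma main: assumes c: "compat m s t" shows "skew_join m z s t = join m s t"
proof -
  define ds where "ds = dom_s m s"
  define dt where "dt = dom_s m t"
  define rs where "rs = ran_s m s"
  define rt where "rt = ran_s m t"
  have ids: "idem m ds" and idt: "idem m dt" and irs: "idem m rs" and irt: "idem m rt"
    unfolding ds_def dt_def rs_def rt_def dom_s_def ran_s_def by (auto simp: idem_dom idem_ran)
  define e where "e = rel_compl m z ds (m ds dt)"
  define f where "f = rel_compl m z rs (m rs rt)"
  have le1: "nat_le m (m ds dt) ds"
    using le_idem_iff[OF idem_prod[OF ids idt]] idemD'[OF ids] by simp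
  have le2: "nat_le m (m rs rt) rs"
    using le_idem_iff[OF idem_prod[OF irs irt]] idemD'[OF irs] by simp
  have E: "idem m e \<and> nat_le m e ds \<and> m (m ds dt) e = z \<and> join_E m (m ds dt) e = ds"
    unfolding e_def by (rule compl[OF ids idem_prod[OF ids idt] le1])
  have F: "idem m f \<and> nat_le m f rs \<and> m (m rs rt) f = z \<and> join_E m (m rs rt) f = rs"
    unfolding f_def by (rule compl[OF irs idem_prod[OF irs irt] le2])
  have ie: "idem m e" and i_f: "idem m f" using E F by auto
  have e_ds: "m ds e = e" using E le_idem_iff[OF ie] by metis
  have dte: "m dt e = z"
  proof -
    have "m dt e = m dt (m ds e)" using e_ds by simp
    also have "\<dots> = m ds (m dt e)" by (rule comm_x[OF idt ids])
    also have "\<dots> = z" using E by simp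
    finally show ?thesis .
  qed
  have te: "m t e = z"
  proof -
    have "m t e = m t (m dt e)" unfolding dt_def dom_s_def by simp
    then show ?thesis using dte by simp
  qed
  have et: "m e (iv t) = z"
    using arg_cong[OF te, of iv] unfolding iv_prod idem_inv[OF ie] by simp
  define w where "w = m s (m e (iv s))"
  have ce: "m e (m (iv s) (m s x)) = m (iv s) (m s (m e x))" for x
    using comm_x[OF ie idem_dom[of s]] by simp
  have iw: "idem m w" unfolding idem_def w_def using ce idemD'[OF ie] by simp
  have q: "idem m (m (iv s) t)" using c unfolding compat_def by auto
  have cq: "m e (m (iv s) (m t x)) = m (iv s) (m t (m e x))" for x
    using comm_x[OF ie q] by simp
  have wrt: "m w rt = z" unfolding w_def rt_def ran_s_def using cq et by simp
  have wrs: "m w rs = w" unfolding w_def rs_def ran_s_def by simp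
  have "w = m w (join_E m (m rs rt) f)" using F wrs by simp
  also have "\<dots> = join_E m (m w (m rs rt)) (m w f)"
    by (rule distE[OF iw idem_prod[OF irs irt] i_f])
  also have "m w (m rs rt) = z" using wrs wrt by (metis assoc)
  also have "join_E m z (m w f) = m w f" by (rule joinE_zero[OF idem_prod[OF iw i_f]])
  finally have wf: "m w f = w" by simp
  have "m s e = m w (m s e)" unfolding w_def using ce idemD[OF ie] by simp
  also have "\<dots> = m (m f w) (m s e)" using wf idem_comm[OF iw i_f] by simp
  also have "\<dots> = m f (m w (m s e))" by simp
  also have "m w (m s e) = m s e" unfolding w_def using ce idemD[OF ie] by simp
  finally have fse: "m f (m s e) = m s e" by simp
  have sd: "skew_diff m z s t = m s e"
    unfolding skew_diff_def Let_def using fse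
    by (simp add: e_def f_def ds_def dt_def rs_def rt_def)
  define J where "J = join m s t"
  have hJ: "is_join m J s t" unfolding J_def by (rule compat_join[OF c])
  have dse: "dom_s m (m s e) = e" using dom_mult_idem[OF ie, of s] e_ds unfolding ds_def by simp
  have swap: "m s dt = m t ds" unfolding ds_def dt_def by (rule compat_swap[OF c])
  have dsJ: "ds = join m (m ds dt) e" using E joinE_join[OF idem_prod[OF ids idt] ie] by simp
  have cpt: "compat m (m ds dt) e" by (rule idem_compat[OF idem_prod[OF ids idt] ie])
  have sds: "m s (m ds x) = m s x" for x unfolding ds_def dom_s_def by simp
  have "is_join m J (m s e) t" unfolding is_join_def
  proof (intro conjI allI impI)
    show "nat_le m (m s e) J" using le_trans[OF mult_right_le[OF ie]] hJ unfolding is_join_def by blast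
    show "nat_le m t J" using hJ unfolding is_join_def by blast
    fix y assume y: "nat_le m (m s e) y \<and> nat_le m t y"
    have sey: "m s e = m y e" using y dse unfolding nat_le_def by simp
    have ty: "t = m y dt" using y unfolding nat_le_def dt_def by simp
    have "m y ds = m y (join m (m ds dt) e)" using dsJ by simp
    also have "\<dots> = join m (m y (m ds dt)) (m y e)" by (rule distrib[OF cpt])
    also have "m y (m ds dt) = m s dt"
      using ty swap idem_comm[OF ids idt] by (metis assoc)
    also have "join m (m s dt) (m y e) = join m (m s (m ds dt)) (m s e)" using sds sey by simp
    also have "\<dots> = m s (join m (m ds dt) e)" by (rule distrib[OF cpt, symmetric])
    also have "\<dots> = s" using dsJ[symmetric] unfolding ds_def dom_s_def by simp
    finally have "nat_le m s y" unfolding nat_le_def ds_def by simp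
    then show "nat_le m J y" using hJ y unfolding is_join_def by blast
  qed
  then have "join m (m s e) t = J" by (rule join_eq)
  then show ?thesis unfolding skew_join_def sd J_def .
qed

end

theorem lemma5p1:
  fixes m :: "'a \<Rightarrow> 'a \<Rightarrow> 'a" and z :: 'a and s t :: 'a
  assumes "boolean_inverse_semigroup m z"
    and "compat m s t"
  shows "skew_join m z s t = join m s t"
proof -
  interpret bisg m z
  proof
    show "inverse_semigroup m" using assms(1) unfolding boolean_inverse_semigroup_def by blast
    show "boolean_inverse_semigroup m z" by (rule assms(1))
  qed
  show ?thesis by (rule main[OF assms(2)])
qed

end
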